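(* For all integers $t,a,b,r$ with $a\ge2$ and $b\ge1$, define \[ f(t,a,b,r)=\sum_{i=1}^{a-1}(-1)^{a+i}\binom{t-1}{i-1}\binom{t-2-a+r+i}{b-1}, \] \[ g(t,a,b,r)=-\binom{t-2}{a-2}\binom{t-2+r}{b-1}+\sum_{i=1}^{a-1}(-1)^{a+i+1}\binom{t-2}{i-1}\binom{t-2-a+r+i}{b-2}. \] Then $f(t,a,b,r)=g(t,a,b,r)$ for all such $t,a,b,r$.
   Context: Binomial coefficients are polynomials in the upper entry: $\binom{x}{k}=\frac{x(x-1)\cdots(x-k+1)}{k!}$ for integers $k\ge0$ and any integer $x$ (possibly negative), and $\binom{x}{k}=0$ for $k<0$. *)

theory Defs
  imports Complex_Main
begin

definition ibinom :: "int \<Rightarrow> int \<Rightarrow> rat" where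
  "ibinom x k = (if k < 0 then 0 else (of_int x :: rat) gchoose (nat k))"

definition f55 :: "int \<Rightarrow> int \<Rightarrow> int \<Rightarrow> int \<Rightarrow> rat" where
  "f55 t a b r = (\<Sum>i\<in>{1..a-1}. (-1) ^ nat (a+i) * ibinom (t-1) (i-1) * ibinom (t-2-a+r+i) (b-1))"

definition g55 :: "int \<Rightarrow> int \<Rightarrow> int \<Rightarrow> int \<Rightarrow> rat" where
  "g55 t a b r = - ibinom (t-2) (a-2) * ibinom (t-2+r) (b-1)
     + (\<Sum>i\<in>{1..a-1}. (-1) ^ nat (a+i+1) * ibinom (t-2) (i-1) * ibinom (t-2-a+r+i) (b-2))"

end

theory Submission
  imports Defs
begin

lemma ibinom_pascal: "ibinom (y+1) k = ibinom y k + ibinom y (k-1)"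
proof -
  consider "k < 0" | "k = 0" | "k > 0" by linarith
  then show ?thesis
  proof cases
    case 1 then show ?thesis by (simp add: ibinom_def)
  next
    case 2 then show ?thesis by (simp add: ibinom_def)
  next
    case 3
    then obtain m where m: "k = int (Suc m)" by (metis gr0_implies_Suc pos_int_cases)
    have "((of_int y + 1 :: rat) gchoose (Suc m)) = (of_int y gchoose m) + (of_int y gchoose (Suc m))"
      by (rule gbinomial_Suc_Suc)
    moreover have "nat k = Suc m" "nat (k-1) = m" using m by auto
    ultimately show ?thesis using m by (simp add: ibinom_def add.commute)
  qed
qed

lemma telescope_int:
  fixes h :: "int \<Rightarrow> rat"
  shows "(\<Sum>i\<in>{1..int m}. h i - h (i-1)) = h (int m) - h 0"
proof (induction m)
  case 0 then show ?case by simp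
next
  case (Suc m)
  have "{1..int (Suc m)} = insert (int m + 1) {1..int m}" by auto
  then show ?case using Suc by (simp add: add.commute)
qed

theorem lemma5p5:
  fixes t a b r :: int
  assumes "a \<ge> 2" and "b \<ge> 1"
  shows "f55 t a b r = g55 t a b r"
proof -
  define x where "x = t - 2"
  define h where "h i = (-1::rat) ^ nat (a+i) * ibinom x (i-1) * ibinom (x-a+r+i+1) (b-1)" for i
  have tm: "(-1) ^ nat (a+i) * ibinom (t-1) (i-1) * ibinom (t-2-a+r+i) (b-1)
      - (-1) ^ nat (a+i+1) * ibinom (t-2) (i-1) * ibinom (t-2-a+r+i) (b-2) = h i - h (i-1)"
    if "i \<in> {1..a-1}" for i
  proof -
    from that assms have nn: "a + i - 1 \<ge> 0" by auto
    have s1: "(-1::rat) ^ nat (a+i+1) = - ((-1) ^ nat (a+i))"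
      using nn by (simp add: nat_add_distrib)
    have s2: "(-1::rat) ^ nat (a+(i-1)) = - ((-1) ^ nat (a+i))"
    proof -
      have "nat (a+i) = Suc (nat (a+(i-1)))" using nn by simp
      then show ?thesis by simp
    qed
    have p1: "ibinom (t-1) (i-1) = ibinom x (i-1) + ibinom x (i-1-1)"
      using ibinom_pascal[of x "i-1"] by (simp add: x_def)
    have p2: "ibinom (x-a+r+i+1) (b-1) = ibinom (x-a+r+i) (b-1) + ibinom (x-a+r+i) (b-2)"
      using ibinom_pascal[of "x-a+r+i" "b-1"] by (simp add: algebra_simps)
    have e1: "x - a + r + (i - 1) + 1 = x-a+r+i" by simp
    have "h i - h (i-1) = (-1) ^ nat (a+i) * ibinom x (i-1) * (ibinom (x-a+r+i) (b-1) + ibinom (x-a+r+i) (b-2))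
         + (-1) ^ nat (a+i) * ibinom x (i-1-1) * ibinom (x-a+r+i) (b-1)"
      unfolding h_def s2 e1 p2 by (simp add: algebra_simps)
    also have "\<dots> = (-1) ^ nat (a+i) * ibinom (t-1) (i-1) * ibinom (t-2-a+r+i) (b-1)
      - (-1) ^ nat (a+i+1) * ibinom (t-2) (i-1) * ibinom (t-2-a+r+i) (b-2)"
      unfolding s1 p1 x_def by (simp add: algebra_simps)
    finally show ?thesis by simp
  qed
  have "f55 t a b r - (\<Sum>i\<in>{1..a-1}. (-1) ^ nat (a+i+1) * ibinom (t-2) (i-1) * ibinom (t-2-a+r+i) (b-2))
      = (\<Sum>i\<in>{1..a-1}. h i - h (i-1))"
    unfolding f55_def sum_subtractf[symmetric] using tm by (rule sum.cong[OF refl])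
  also have "\<dots> = h (a-1) - h 0"
    using telescope_int[of h "nat (a-1)"] assms by simp
  also have "h 0 = 0" by (simp add: h_def ibinom_def)
  also have "h (a-1) = - ibinom (t-2) (a-2) * ibinom (t-2+r) (b-1)"
  proof -
    have "nat (a + (a-1)) = Suc (2 * nat (a-1))" using assms by simp
    then have "(-1::rat) ^ nat (a + (a-1)) = -1" by simp
    then show ?thesis unfolding h_def x_def by (simp add: algebra_simps)
  qed
  finally show ?thesis unfolding g55_def by (simp add: algebra_simps)
qed

end
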